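(* Consider $N$ agents $\mathcal{V}=\{1,\dots,N\}$ interacting over a fixed graph in which agent $i$ has the nonempty neighbor set $\mathcal{N}_i$ of cardinality $n_i$. Let $\beta\in[0,1]$ and let $(q_p(k))_{k\ge0}$ be a sequence with values in $\{-1,1\}$. The opinions evolve by $$\theta_i(k+1)=\theta_i(k)+\bigl(1-\theta_i(k)^2\bigr)\Bigl[\beta\bigl(q_p(k)-\theta_i(k)\bigr)+(1-\beta)\frac{1}{n_i}\sum_{j\in\mathcal{N}_i}\bigl(q_j(k)-\theta_i(k)\bigr)\Bigr],$$ with actions $q_j(k)=1$ if $\theta_j(k)>0$ or ($\theta_j(k)=0$ and $q_j(k-1)=1$), and $q_j(k)=-1$ if $\theta_j(k)<0$ or ($\theta_j(k)=0$ and $q_j(k-1)=-1$). Let $n_i^{\pm}(k)=|\{j\in\mathcal{N}_i:q_j(k)=\pm1\}|$. Let $i\in\mathcal{V}$ with $\theta_i(0)\in(-1,1)$ and assume $\beta<1/(1+n_i)$. Then for every $k$: - if $n_i^+(k)>n_i^-(k)$ and $q_i(k)=1$, then $q_i(k+1)=1$; - if $n_i^-(k)>n_i^+(k)$ and $q_i(k)=-1$, then $q_i(k+1)=-1$.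
   Context: Opinions take values in $[-1,1]$. The neighbor set $\mathcal{N}_i$ consists of the agents $j$ with $(j,i)$ an edge of the graph. *)

theory Defs
  imports Complex_Main
begin

definition nbrs :: "'a set \<Rightarrow> ('a \<times> 'a) set \<Rightarrow> 'a \<Rightarrow> 'a set" where
  "nbrs V E i = {j \<in> V. (j, i) \<in> E}"

definition npos :: "'a set \<Rightarrow> ('a \<times> 'a) set \<Rightarrow> ('a \<Rightarrow> real) \<Rightarrow> 'a \<Rightarrow> nat" where
  "npos V E qk i = card {j \<in> nbrs V E i. qk j = 1}"

definition nneg :: "'a set \<Rightarrow> ('a \<times> 'a) set \<Rightarrow> ('a \<Rightarrow> real) \<Rightarrow> 'a \<Rightarrow> nat" where
  "nneg V E qk i = card {j \<in> nbrs V E i. qk j = -1}"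

end

theory Submission
  imports Defs
begin

lemma key_ineq:
  fixes n \<beta> qp S t :: real
  assumes n: "n \<ge> 1" and S1: "S \<ge> 1" and Sn: "S \<le> n"
    and b0: "0 \<le> \<beta>" and b1: "\<beta> \<le> 1" and bs: "\<beta> < 1 / (1 + n)"
    and qp: "qp = 1 \<or> qp = -1" and t: "t \<ge> 0"
  shows "t + (1 - t\<^sup>2) * (\<beta> * (qp - t) + (1 - \<beta>) * (1 / n) * (S - n * t)) \<ge> 0"
proof -
  define c where "c = \<beta> * qp + (1 - \<beta>) * (S / n)"
  have eq: "t + (1 - t\<^sup>2) * (\<beta> * (qp - t) + (1 - \<beta>) * (1 / n) * (S - n * t))
      = t^3 + (1 - t\<^sup>2) * c"
  proof -
    have h: "(1 - \<beta>) * (1 / n) * (S - n * t) = (1 - \<beta>) * (S / n) - (1 - \<beta>) * t"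
      using n by (simp add: field_simps)
    show ?thesis unfolding h c_def
      by (simp only: power2_eq_square power3_eq_cube) (simp add: algebra_simps)
  qed
  have bn: "\<beta> * (1 + n) < 1" using bs n by (simp add: field_simps)
  have Sn1: "S / n \<ge> 1 / n" using S1 n by (simp add: divide_right_mono)
  have Sn2: "S / n \<le> 1" using Sn n by simp
  have "(1 - \<beta>) * (S / n) \<ge> (1 - \<beta>) * (1 / n)" using Sn1 b1 by (intro mult_left_mono) auto
  moreover have "(1 - \<beta>) * (1 / n) > \<beta>"
  proof -
    have "\<beta> * n < 1 - \<beta>" using bn by (simp add: algebra_simps)
    thus ?thesis using n by (simp add: field_simps)
  qed
  moreover have "\<beta> * qp \<ge> - \<beta>" using qp b0 by auto
  ultimately have c0: "c > 0" unfolding c_def by linarith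
  have "(1 - \<beta>) * (S / n) \<le> 1 - \<beta>" using Sn2 b1 mult_left_mono[OF Sn2, of "1 - \<beta>"] by simp
  moreover have "\<beta> * qp \<le> \<beta>" using qp b0 by auto
  ultimately have c1: "c \<le> 1" unfolding c_def by linarith
  show ?thesis
  proof (cases "t \<le> 1")
    case True
    then have "t\<^sup>2 \<le> 1" using t by (simp add: power_le_one)
    then have "(1 - t\<^sup>2) * c \<ge> 0" using c0 by (intro mult_nonneg_nonneg) auto
    moreover have "t^3 \<ge> 0" using t by simp
    ultimately show ?thesis unfolding eq by linarith
  next
    case False
    then have "t\<^sup>2 \<ge> 1" by (simp add: one_le_power)
    then have "(1 - t\<^sup>2) * c \<ge> (1 - t\<^sup>2)"
    proof -
      have "(t\<^sup>2 - 1) * (1 - c) \<ge> 0" using \<open>t\<^sup>2 \<ge> 1\<close> c1 by (intro mult_nonneg_nonneg) auto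
      thus ?thesis by (simp add: algebra_simps)
    qed
    moreover have "t^3 \<ge> t\<^sup>2"
    proof -
      have "t\<^sup>2 * 1 \<le> t\<^sup>2 * t" using False by (intro mult_left_mono) auto
      thus ?thesis by (simp add: power2_eq_square power3_eq_cube)
    qed
    ultimately show ?thesis unfolding eq by linarith
  qed
qed

lemma neg_sym:
  fixes x y a b m p n :: real
  shows "- x + (1 - (- x)\<^sup>2) * (b * (- y - - x) + a * ((m - p) - n * - x))
     = - (x + (1 - x\<^sup>2) * (b * (y - x) + a * ((p - m) - n * x)))"
  by (simp add: algebra_simps)

theorem mainTheorem4:
  fixes V :: "'a set" and E :: "('a \<times> 'a) set"
    and \<beta> :: real and qp :: "nat \<Rightarrow> real"
    and \<theta> :: "nat \<Rightarrow> 'a \<Rightarrow> real" and q :: "nat \<Rightarrow> 'a \<Rightarrow> real"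
    and i :: 'a
  assumes finV: "finite V" and EV: "E \<subseteq> V \<times> V"
    and nonempty_nbrs: "\<And>j. j \<in> V \<Longrightarrow> nbrs V E j \<noteq> {}"
    and beta: "0 \<le> \<beta>" "\<beta> \<le> 1"
    and qp_vals: "\<And>k. qp k = 1 \<or> qp k = -1"
    and init: "\<And>j. j \<in> V \<Longrightarrow> -1 \<le> \<theta> 0 j \<and> \<theta> 0 j \<le> 1"
    and dyn: "\<And>k j. j \<in> V \<Longrightarrow> \<theta> (Suc k) j = \<theta> k j + (1 - (\<theta> k j)\<^sup>2) *
        (\<beta> * (qp k - \<theta> k j) + (1 - \<beta>) * (1 / real (card (nbrs V E j))) *
           (\<Sum>l\<in>nbrs V E j. q k l - \<theta> k j))"
    and q_vals: "\<And>k j. j \<in> V \<Longrightarrow> q k j = 1 \<or> q k j = -1"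
    and q_pos: "\<And>k j. j \<in> V \<Longrightarrow> \<theta> k j > 0 \<Longrightarrow> q k j = 1"
    and q_neg: "\<And>k j. j \<in> V \<Longrightarrow> \<theta> k j < 0 \<Longrightarrow> q k j = -1"
    and q_zero: "\<And>k j. j \<in> V \<Longrightarrow> \<theta> (Suc k) j = 0 \<Longrightarrow> q (Suc k) j = q k j"
    and iV: "i \<in> V"
    and init_i: "-1 < \<theta> 0 i" "\<theta> 0 i < 1"
    and beta_small: "\<beta> < 1 / (1 + real (card (nbrs V E i)))"
  shows "\<forall>k. (npos V E (q k) i > nneg V E (q k) i \<and> q k i = 1 \<longrightarrow> q (Suc k) i = 1)
            \<and> (nneg V E (q k) i > npos V E (q k) i \<and> q k i = -1 \<longrightarrow> q (Suc k) i = -1)"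
proof (intro allI conjI impI)
  fix k
  define N where "N = nbrs V E i"
  define n where "n = real (card N)"
  have finN: "finite N" using finV unfolding N_def nbrs_def by simp
  have NV: "N \<subseteq> V" unfolding N_def nbrs_def by auto
  have cardpos: "card N > 0" using finN nonempty_nbrs[OF iV] unfolding N_def by (simp add: card_gt_0_iff)
  hence n1: "n \<ge> 1" unfolding n_def by simp
  define P where "P = {j \<in> N. q k j = 1}"
  define M where "M = {j \<in> N. q k j = -1}"
  have PM: "P \<union> M = N" "P \<inter> M = {}" using q_vals NV unfolding P_def M_def by auto
  have finP: "finite P" using finN unfolding P_def by simp
  have finM: "finite M" using finN unfolding M_def by simp
  have cardN: "card N = card P + card M"
    using card_Un_disjoint[OF finP finM PM(2)] PM(1) by simp
  have sq: "(\<Sum>l\<in>N. q k l) = real (card P) - real (card M)"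
  proof -
    have "(\<Sum>l\<in>N. q k l) = (\<Sum>l\<in>P. q k l) + (\<Sum>l\<in>M. q k l)"
      using sum.union_disjoint[OF finP finM PM(2), of "q k"] PM(1) by simp
    also have "(\<Sum>l\<in>P. q k l) = (\<Sum>l\<in>P. 1)" by (rule sum.cong) (auto simp: P_def)
    also have "(\<Sum>l\<in>M. q k l) = (\<Sum>l\<in>M. -1)" by (rule sum.cong) (auto simp: M_def)
    finally show ?thesis by simp
  qed
  have sumeq: "(\<Sum>l\<in>N. q k l - \<theta> k i) = (real (card P) - real (card M)) - n * \<theta> k i"
    unfolding sum_subtractf sq n_def by simp
  have npos: "npos V E (q k) i = card P" unfolding npos_def P_def N_def ..
  have nneg: "nneg V E (q k) i = card M" unfolding nneg_def M_def N_def ..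
  have dyn': "\<theta> (Suc k) i = \<theta> k i + (1 - (\<theta> k i)\<^sup>2) *
        (\<beta> * (qp k - \<theta> k i) + (1 - \<beta>) * (1 / n) * ((real (card P) - real (card M)) - n * \<theta> k i))"
  proof -
    have "\<theta> (Suc k) i = \<theta> k i + (1 - (\<theta> k i)\<^sup>2) *
        (\<beta> * (qp k - \<theta> k i) + (1 - \<beta>) * (1 / n) * (\<Sum>l\<in>N. q k l - \<theta> k i))"
      using dyn[OF iV, of k] unfolding N_def n_def .
    then show ?thesis unfolding sumeq .
  qed
  have bs: "\<beta> < 1 / (1 + n)" using beta_small unfolding n_def N_def .
  {
    assume h: "nneg V E (q k) i < npos V E (q k) i \<and> q k i = 1"
    have t: "\<theta> k i \<ge> 0" using h q_neg[OF iV, of k] by force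
    have S1: "real (card P) - real (card M) \<ge> 1" using h npos nneg by simp
    have Sn: "real (card P) - real (card M) \<le> n" using cardN n_def by simp
    have "\<theta> (Suc k) i \<ge> 0" unfolding dyn'
      by (rule key_ineq[OF n1 S1 Sn beta(1) beta(2) bs qp_vals t])
    then show "q (Suc k) i = 1"
      using q_pos[OF iV, of "Suc k"] q_zero[OF iV, of k] h by force
  }
  {
    assume h: "npos V E (q k) i < nneg V E (q k) i \<and> q k i = -1"
    have t: "- \<theta> k i \<ge> 0" using h q_pos[OF iV, of k] by force
    have S1: "real (card M) - real (card P) \<ge> 1" using h npos nneg by simp
    have Sn: "real (card M) - real (card P) \<le> n" using cardN n_def by simp
    have qp': "- qp k = 1 \<or> - qp k = -1" using qp_vals[of k] by auto
    have "- \<theta> k i + (1 - (- \<theta> k i)\<^sup>2) *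
        (\<beta> * (- qp k - - \<theta> k i) + (1 - \<beta>) * (1 / n) * ((real (card M) - real (card P)) - n * - \<theta> k i)) \<ge> 0"
      by (rule key_ineq[OF n1 S1 Sn beta(1) beta(2) bs qp' t])
    moreover have "- \<theta> k i + (1 - (- \<theta> k i)\<^sup>2) *
        (\<beta> * (- qp k - - \<theta> k i) + (1 - \<beta>) * (1 / n) * ((real (card M) - real (card P)) - n * - \<theta> k i))
       = - \<theta> (Suc k) i" unfolding dyn' by (rule neg_sym)
    ultimately have "\<theta> (Suc k) i \<le> 0" by linarith
    then show "q (Suc k) i = -1"
      using q_neg[OF iV, of "Suc k"] q_zero[OF iV, of k] h by force
  }
qed

end
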